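(* Let $b$ be a prime, $s,m\in\mathbb{N}$, and let $\mathcal{P}$ be a digital $((t_{\mathfrak{u}})_{\mathfrak{u}\subseteq[s]},m,s)$-net over $\mathbb{F}_b$ with generating matrices $C_1^{(m)},\dots,C_s^{(m)}\in\mathbb{F}_b^{m\times m}$. Let $0=w_1\le\dots\le w_s$ be reduction indices, $\widetilde{C}_1^{(m)},\dots,\widetilde{C}_s^{(m)}$ the corresponding row reduced matrices, and let $(\widetilde{t}_{\mathfrak{u}})_{\mathfrak{u}\subseteq[s]}$ be the minimal quality parameters of the projections of the digital net generated by the $\widetilde{C}_j^{(m)}$. Then for every nonempty $\mathfrak{u}\subseteq[s]$, writing $\overline{\mathfrak{u}}=\max\mathfrak{u}$, \[ \max\{0,\, m-\max\{w_{\overline{\mathfrak{u}}},t_{\mathfrak{u}}\}\}\le \rho_m\big((\widetilde{C}_j^{(m)})_{j\in\mathfrak{u}}\big)\le \max\{0,\, m-w_{\overline{\mathfrak{u}}}\}, \] and $\widetilde{t}_{\mathfrak{u}}\le\min\{m,\max\{w_{\overline{\mathfrak{u}}},t_{\mathfrak{u}}\}\}$.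
   Context: $[s]=\{1,\dots,s\}$. Digital nets over $\mathbb{F}_b$: for matrices $C_1^{(m)},\dots,C_s^{(m)}\in\mathbb{F}_b^{m\times m}$, the generated net consists of the $b^m$ points $\boldsymbol{x}_k$, $0\le k<b^m$, with $x_{k,j}=(C_j^{(m)}\vec{k})\cdot(b^{-1},\dots,b^{-m})$, where $\vec{k}=(k_0,\dots,k_{m-1})^\top$ is the base-$b$ digit vector of $k=\sum k_ib^i$ and the product is computed over $\mathbb{F}_b$ (identified with $\{0,\dots,b-1\}$). A $(t,m,s)$-net in base $b$ is a set of $b^m$ points in $[0,1)^s$ such that every elementary interval $\prod_j[a_jb^{-d_j},(a_j+1)b^{-d_j})$ of volume $b^{t-m}$ contains exactly $b^t$ points. A digital $((t_{\mathfrak{u}})_{\mathfrak{u}\subseteq[s]},m,s)$-net is a digital net such that, for each nonempty $\mathfrak{u}\subseteq[s]$, the projection onto the coordinates in $\mathfrak{u}$ (generated by $(C_j^{(m)})_{j\in\mathfrak{u}}$) is a $(t_{\mathfrak{u}},m,|\mathfrak{u}|)$-net; the minimal quality parameter of a projection is the smallest such value. The linear independence parameter $\rho_m$ of a family of $m\times m$ matrices $(C_j)_{j\in J}$ is the largest $d$ such that for all $d_j\in\mathbb{N}_0$ ($j\in J$) with $\sum_j d_j=d$, the collection of the first $d_j$ rows of $C_j$, $j\in J$, is linearly independent over $\mathbb{F}_b$. Row reduction: $\widetilde{C}_j^{(m)}$ equals $C_j^{(m)}$ except that its last $\min(m,w_j)$ rows are set to zero. *)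

theory Defs
  imports Complex_Main "HOL-Computational_Algebra.Primes"
begin

text \<open>The field F_b (b prime) is identified with {0..<b}, arithmetic mod b.
An m x m matrix over F_b is a function  nat => nat => nat  (row index i < m,
column index k < m, 0-based; row i here is row i+1 of the paper).
A family of matrices is indexed by coordinates j (1-based, j in {1..s}).\<close>

definition digit :: "nat \<Rightarrow> nat \<Rightarrow> nat \<Rightarrow> nat" where
  "digit b k l = (k div b ^ l) mod b"

definition dnet_point :: "nat \<Rightarrow> nat \<Rightarrow> (nat \<Rightarrow> nat \<Rightarrow> nat \<Rightarrow> nat) \<Rightarrow> nat \<Rightarrow> nat \<Rightarrow> real" where
  "dnet_point b m C k j =
     (\<Sum>i<m. real ((\<Sum>l<m. C j i l * digit b k l) mod b) / real b ^ (i + 1))"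

text \<open>The projection onto coordinates u of the digital net generated by C (b^m points,
counted with multiplicity) is a (t,m,|u|)-net in base b.\<close>
definition is_proj_tms_net :: "nat \<Rightarrow> nat \<Rightarrow> (nat \<Rightarrow> nat \<Rightarrow> nat \<Rightarrow> nat) \<Rightarrow> nat set \<Rightarrow> nat \<Rightarrow> bool" where
  "is_proj_tms_net b m C u t \<longleftrightarrow> t \<le> m \<and>
     (\<forall>d a. (\<Sum>j\<in>u. d j) = m - t \<longrightarrow> (\<forall>j\<in>u. a j < b ^ d j) \<longrightarrow>
        card {k. k < b ^ m \<and> (\<forall>j\<in>u.
             real (a j) / real b ^ d j \<le> dnet_point b m C k j \<and>
             dnet_point b m C k j < real (a j + 1) / real b ^ d j)} = b ^ t)"

definition min_quality :: "nat \<Rightarrow> nat \<Rightarrow> (nat \<Rightarrow> nat \<Rightarrow> nat \<Rightarrow> nat) \<Rightarrow> nat set \<Rightarrow> nat" where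
  "min_quality b m C u = (LEAST t. is_proj_tms_net b m C u t)"

definition rows_lin_indep :: "nat \<Rightarrow> nat \<Rightarrow> (nat \<Rightarrow> nat \<Rightarrow> nat \<Rightarrow> nat) \<Rightarrow> nat set \<Rightarrow> (nat \<Rightarrow> nat) \<Rightarrow> bool" where
  "rows_lin_indep b m C J d \<longleftrightarrow>
     (\<forall>c::nat \<Rightarrow> nat \<Rightarrow> nat. (\<forall>j\<in>J. \<forall>i<d j. c j i < b) \<longrightarrow>
        (\<forall>k<m. (\<Sum>j\<in>J. \<Sum>i<d j. c j i * C j i k) mod b = 0) \<longrightarrow>
        (\<forall>j\<in>J. \<forall>i<d j. c j i = 0))"

definition lin_indep_param :: "nat \<Rightarrow> nat \<Rightarrow> (nat \<Rightarrow> nat \<Rightarrow> nat \<Rightarrow> nat) \<Rightarrow> nat set \<Rightarrow> nat" where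
  "lin_indep_param b m C J =
     (GREATEST e. \<forall>d. (\<Sum>j\<in>J. d j) = e \<longrightarrow> rows_lin_indep b m C J d)"

definition row_reduce :: "nat \<Rightarrow> (nat \<Rightarrow> nat) \<Rightarrow> (nat \<Rightarrow> nat \<Rightarrow> nat \<Rightarrow> nat) \<Rightarrow> nat \<Rightarrow> nat \<Rightarrow> nat \<Rightarrow> nat" where
  "row_reduce m w C j i k = (if m - min m (w j) \<le> i then 0 else C j i k)"

end

theory Submission
  imports Defs "HOL-Library.FuncSet" "HOL-Number_Theory.Cong"
begin

lemma digits_sum_less:
  fixes b :: nat
  assumes "\<forall>l<n. z l < b"
  shows "(\<Sum>l<n. z l * b ^ l) < b ^ n"
  using assms
proof (induction n)
  case 0 then show ?case by simp
next
  case (Suc n)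
  have IH: "(\<Sum>l<n. z l * b ^ l) < b ^ n" using Suc by auto
  have "z n \<le> b - 1" using Suc.prems by auto
  hence "z n * b ^ n \<le> (b - 1) * b ^ n" by (rule mult_right_mono) simp
  moreover have "b ^ n + (b - 1) * b ^ n = b ^ Suc n"
    using Suc.prems by (cases b) auto
  ultimately have "(\<Sum>l<n. z l * b ^ l) + z n * b ^ n < b ^ Suc n" using IH by linarith
  thus ?case by simp
qed

lemma digits_extract:
  fixes b :: nat
  assumes "\<forall>l<n. z l < b" "p < n"
  shows "(\<Sum>l<n. z l * b ^ l) div b ^ p mod b = z p"
  using assms
proof (induction n)
  case 0 then show ?case by simp
next
  case (Suc n)
  have b0: "b > 0" using Suc.prems by auto
  define S where "S = (\<Sum>l<n. z l * b ^ l)"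
  have SL: "S < b ^ n" unfolding S_def using Suc.prems by (intro digits_sum_less) auto
  have eq: "(\<Sum>l<Suc n. z l * b ^ l) = S + z n * b ^ n" by (simp add: S_def)
  show ?case
  proof (cases "p < n")
    case True
    have "b ^ n = b ^ p * (b * b ^ (n - p - 1))"
      using True by (simp flip: power_add power_Suc)
    hence e2: "S + z n * b ^ n = S + b ^ p * (b * (z n * b ^ (n - p - 1)))" by simp
    moreover have "(S + b ^ p * (b * (z n * b ^ (n - p - 1)))) div b ^ p = S div b ^ p + b * (z n * b ^ (n - p - 1))"
      using b0 by simp
    ultimately have "(S + z n * b ^ n) div b ^ p = S div b ^ p + b * (z n * b ^ (n - p - 1))"
      by (simp only: e2)
    hence "(S + z n * b ^ n) div b ^ p mod b = S div b ^ p mod b" by simp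
    also have "\<dots> = z p" unfolding S_def using Suc True by auto
    finally show ?thesis using eq by simp
  next
    case False
    hence pn: "p = n" using Suc.prems by simp
    have "(S + z n * b ^ n) div b ^ n = z n" using SL b0 by simp
    thus ?thesis using eq pn Suc.prems by simp
  qed
qed

lemma digits_unique:
  fixes b :: nat
  assumes "x < b ^ d" "y < b ^ d" "\<forall>p<d. x div b ^ p mod b = y div b ^ p mod b"
  shows "x = y"
  using assms
proof (induction d arbitrary: x y)
  case 0 then show ?case by simp
next
  case (Suc d)
  have b0: "b > 0" using Suc.prems by (cases b) auto
  have "x div b < b ^ d" "y div b < b ^ d" using Suc.prems b0
    by (auto simp: div_less_iff_less_mult mult.commute)
  moreover have "\<forall>p<d. x div b div b ^ p mod b = y div b div b ^ p mod b"
  proof (intro allI impI)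
    fix p assume "p < d"
    hence "x div b ^ Suc p mod b = y div b ^ Suc p mod b" using Suc.prems by auto
    thus "x div b div b ^ p mod b = y div b div b ^ p mod b" by (simp add: div_mult2_eq)
  qed
  ultimately have "x div b = y div b" using Suc.IH by blast
  moreover have "x mod b = y mod b" using Suc.prems(3)[rule_format, of 0] by simp
  ultimately show ?case by (metis div_mult_mod_eq)
qed

lemma unique_sol:
  fixes b a s r :: nat
  assumes "prime b" "a mod b \<noteq> 0" "r < b"
  shows "card {z\<in>{..<b}. (a * z + s) mod b = r} = 1"
proof -
  define f where "f z = (a * z + s) mod b" for z
  have b0: "b > 0" using assms prime_gt_0_nat by blast
  have cop: "coprime a b"
    using assms by (metis dvd_eq_mod_eq_0 prime_imp_coprime_nat coprime_commute)
  have inj: "inj_on f {..<b}"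
  proof (rule inj_onI)
    fix x y assume xy: "x \<in> {..<b}" "y \<in> {..<b}" "f x = f y"
    hence "[a * x + s = a * y + s] (mod b)" by (simp add: f_def cong_def)
    hence "[a * x = a * y] (mod b)" by (simp add: cong_add_rcancel_nat)
    hence "[x = y] (mod b)" using cop by (metis cong_mult_lcancel_nat)
    thus "x = y" using xy by (simp add: cong_def)
  qed
  have "f ` {..<b} \<subseteq> {..<b}" using b0 by (auto simp: f_def)
  moreover have "card (f ` {..<b}) = card {..<b}" using inj by (simp add: card_image)
  ultimately have img: "f ` {..<b} = {..<b}" by (simp add: card_subset_eq)
  then obtain z0 where z0: "z0 < b" "f z0 = r" using assms by (metis imageE lessThan_iff)
  have "{z\<in>{..<b}. (a * z + s) mod b = r} = {z0}"
    using z0 inj unfolding f_def[symmetric] by (auto simp: inj_on_def)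
  thus ?thesis by simp
qed

lemma hyperplane:
  fixes b r :: nat and v :: "'a \<Rightarrow> nat"
  assumes "prime b" "finite X" "p \<in> X" "v p mod b \<noteq> 0" "r < b"
  shows "card {x \<in> PiE X (\<lambda>_. {..<b}). (\<Sum>l\<in>X. v l * x l) mod b = r} = b ^ (card X - 1)"
proof -
  define X' where "X' = X - {p}"
  define B where "B x' = {z\<in>{..<b}. (v p * z + (\<Sum>l\<in>X'. v l * x' l)) mod b = r}" for x'
  define S where "S = {x \<in> PiE X (\<lambda>_. {..<b}). (\<Sum>l\<in>X. v l * x l) mod b = r}"
  have sumsplit: "(\<Sum>l\<in>X. v l * x l) = v p * x p + (\<Sum>l\<in>X'. v l * x l)" for x
    unfolding X'_def using assms by (simp add: sum.remove)
  have bij: "bij_betw (\<lambda>x. (restrict x X', x p)) S (Sigma (PiE X' (\<lambda>_. {..<b})) B)"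
  proof (rule bij_betw_byWitness[where f' = "\<lambda>(x', z). x'(p := z)"])
    show "\<forall>x\<in>S. (\<lambda>(x', z). x'(p := z)) (restrict x X', x p) = x"
      unfolding S_def X'_def by (auto simp: PiE_def extensional_def fun_eq_iff)
    show "\<forall>a'\<in>Sigma (PiE X' (\<lambda>_. {..<b})) B.
       (\<lambda>x. (restrict x X', x p)) ((\<lambda>(x', z). x'(p := z)) a') = a'"
      unfolding X'_def by (auto simp: PiE_def extensional_def fun_eq_iff)
    show "(\<lambda>x. (restrict x X', x p)) ` S \<subseteq> Sigma (PiE X' (\<lambda>_. {..<b})) B"
    proof
      fix y assume "y \<in> (\<lambda>x. (restrict x X', x p)) ` S"
      then obtain x where x: "x \<in> S" "y = (restrict x X', x p)" by auto
      have "(\<Sum>l\<in>X'. v l * restrict x X' l) = (\<Sum>l\<in>X'. v l * x l)" by simp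
      thus "y \<in> Sigma (PiE X' (\<lambda>_. {..<b})) B"
        using x assms unfolding S_def B_def X'_def by (auto simp: sumsplit[unfolded X'_def])
    qed
    show "(\<lambda>(x', z). x'(p := z)) ` Sigma (PiE X' (\<lambda>_. {..<b})) B \<subseteq> S"
    proof
      fix y assume "y \<in> (\<lambda>(x', z). x'(p := z)) ` Sigma (PiE X' (\<lambda>_. {..<b})) B"
      then obtain x' z where xz: "x' \<in> PiE X' (\<lambda>_. {..<b})" "z \<in> B x'" "y = x'(p := z)" by auto
      have pX: "p \<notin> X'" unfolding X'_def by simp
      have "(\<Sum>l\<in>X'. v l * (x'(p := z)) l) = (\<Sum>l\<in>X'. v l * x' l)"
        using pX by (intro sum.cong) auto
      moreover have "y \<in> PiE X (\<lambda>_. {..<b})"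
        using xz assms unfolding X'_def B_def by (auto simp: PiE_def extensional_def Pi_def)
      ultimately show "y \<in> S" using xz unfolding S_def B_def by (simp add: sumsplit)
    qed
  qed
  have fin: "finite X'" unfolding X'_def using assms by simp
  have "card S = card (Sigma (PiE X' (\<lambda>_. {..<b})) B)" using bij by (rule bij_betw_same_card)
  also have "\<dots> = (\<Sum>x'\<in>PiE X' (\<lambda>_. {..<b}). card (B x'))"
    using fin by (intro card_SigmaI) (auto simp: B_def finite_PiE)
  also have "\<dots> = (\<Sum>x'\<in>PiE X' (\<lambda>_. {..<b}). 1)"
    unfolding B_def using assms by (intro sum.cong refl unique_sol) auto
  also have "\<dots> = b ^ card X'" using fin by (simp add: card_PiE)
  also have "card X' = card X - 1" unfolding X'_def using assms by simp
  finally show ?thesis unfolding S_def .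
qed

lemma sum_mod_zero:
  fixes b :: nat
  assumes "\<forall>i\<in>I. f i mod b = 0"
  shows "(\<Sum>i\<in>I. c i * f i) mod b = 0"
proof -
  have "(\<Sum>i\<in>I. c i * f i) mod b = (\<Sum>i\<in>I. c i * f i mod b) mod b"
    by (simp only: mod_sum_eq)
  also have "(\<Sum>i\<in>I. c i * f i mod b) = (\<Sum>i\<in>I. 0)"
  proof (rule sum.cong)
    fix i assume "i \<in> I"
    hence "c i * f i mod b = c i * (f i mod b) mod b" by (simp only: mod_mult_right_eq)
    thus "c i * f i mod b = 0" using assms \<open>i \<in> I\<close> by simp
  qed simp
  finally show ?thesis by simp
qed

lemma kernel_card:
  fixes b m :: nat and I :: "'i set" and A :: "'i \<Rightarrow> nat \<Rightarrow> nat"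
  assumes pb: "prime b" and fI: "finite I"
    and indep: "\<forall>c\<in>PiE I (\<lambda>_. {..<b}). (\<forall>l<m. (\<Sum>i\<in>I. c i * A i l) mod b = 0) \<longrightarrow> (\<forall>i\<in>I. c i = 0)"
  shows "card I \<le> m \<and> card {x \<in> PiE {..<m} (\<lambda>_. {..<b}). \<forall>i\<in>I. (\<Sum>l<m. A i l * x l) mod b = 0} = b ^ (m - card I)"
proof -
  define VI where "VI = PiE I (\<lambda>_. {..<b})"
  define VX where "VX = PiE {..<m} (\<lambda>_::nat. {..<b})"
  define K where "K = {x \<in> VX. \<forall>i\<in>I. (\<Sum>l<m. A i l * x l) mod b = 0}"
  define n where "n = card I"
  have b2: "b \<ge> 2" using pb prime_ge_2_nat by blast
  have fVI: "finite VI" unfolding VI_def using fI by (simp add: finite_PiE)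
  have fVX: "finite VX" unfolding VX_def by (simp add: finite_PiE)
  have cVI: "card VI = b ^ n" unfolding VI_def n_def using fI by (simp add: card_PiE)
  have cVX: "card VX = b ^ m" unfolding VX_def by (simp add: card_PiE)
  have KVX: "K \<subseteq> VX" unfolding K_def by auto
  show ?thesis
  proof (cases "I = {}")
    case True
    hence "K = VX" unfolding K_def by auto
    thus ?thesis using True cVX unfolding K_def VX_def by simp
  next
    case False
    then obtain i0 where i0: "i0 \<in> I" by auto
    have n1: "n \<ge> 1" unfolding n_def using i0 fI by (simp add: Suc_le_eq card_gt_0_iff; blast)
    have m1: "m \<ge> 1"
    proof (rule ccontr)
      assume "\<not> m \<ge> 1"
      hence "m = 0" by simp
      define c where "c = (\<lambda>i\<in>I. if i = i0 then 1 else (0::nat))"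
      have "c \<in> VI" unfolding c_def VI_def using b2 by auto
      hence "c i0 = 0" using indep i0 \<open>m = 0\<close> unfolding VI_def by auto
      thus False using i0 unfolding c_def by simp
    qed
    define E where "E c x = (\<Sum>i\<in>I. c i * (\<Sum>l<m. A i l * x l))" for c x :: "_ \<Rightarrow> nat"
    have E2: "E c x = (\<Sum>l<m. (\<Sum>i\<in>I. c i * A i l) * x l)" for c x
    proof -
      have "E c x = (\<Sum>i\<in>I. \<Sum>l<m. c i * A i l * x l)"
        unfolding E_def by (simp add: sum_distrib_left mult.assoc)
      also have "\<dots> = (\<Sum>l<m. \<Sum>i\<in>I. c i * A i l * x l)" by (rule sum.swap)
      also have "\<dots> = (\<Sum>l<m. (\<Sum>i\<in>I. c i * A i l) * x l)" by (simp add: sum_distrib_right)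
      finally show ?thesis .
    qed
    define Q where "Q = Sigma VI (\<lambda>c. {x\<in>VX. E c x mod b = 0})"
    define Q' where "Q' = Sigma VX (\<lambda>x. {c\<in>VI. E c x mod b = 0})"
    have QQ: "Q' = (\<lambda>(c, x). (x, c)) ` Q" unfolding Q_def Q'_def by auto
    have "card Q' = card Q" unfolding QQ by (rule card_image) (auto simp: inj_on_def)
    define z0 where "z0 = (\<lambda>i\<in>I. (0::nat))"
    have z0V: "z0 \<in> VI" unfolding z0_def VI_def using b2 by auto
    have c1: "card Q = b ^ m + (b ^ n - 1) * b ^ (m - 1)"
    proof -
      have "card Q = (\<Sum>c\<in>VI. card {x\<in>VX. E c x mod b = 0})"
        unfolding Q_def using fVI fVX by (intro card_SigmaI) auto
      also have "\<dots> = card {x\<in>VX. E z0 x mod b = 0} + (\<Sum>c\<in>VI - {z0}. card {x\<in>VX. E c x mod b = 0})"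
        using fVI z0V by (simp add: sum.remove)
      also have "card {x\<in>VX. E z0 x mod b = 0} = b ^ m"
        using cVX unfolding E_def z0_def by simp
      also have "(\<Sum>c\<in>VI - {z0}. card {x\<in>VX. E c x mod b = 0}) = (\<Sum>c\<in>VI - {z0}. b ^ (m - 1))"
      proof (rule sum.cong)
        fix c assume c: "c \<in> VI - {z0}"
        have "\<exists>i\<in>I. c i \<noteq> 0"
        proof (rule ccontr)
          assume "\<not> (\<exists>i\<in>I. c i \<noteq> 0)"
          hence "c = z0" using c unfolding z0_def VI_def by (auto simp: PiE_def extensional_def fun_eq_iff)
          thus False using c by simp
        qed
        moreover have "c \<in> PiE I (\<lambda>_. {..<b})" using c unfolding VI_def by simp
        hence "(\<forall>l<m. (\<Sum>i\<in>I. c i * A i l) mod b = 0) \<longrightarrow> (\<forall>i\<in>I. c i = 0)"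
          by (rule bspec[OF indep])
        ultimately have "\<not> (\<forall>l<m. (\<Sum>i\<in>I. c i * A i l) mod b = 0)"
          by (meson bexE)
        then obtain l where l: "l < m" "(\<Sum>i\<in>I. c i * A i l) mod b \<noteq> 0"
          by blast
        have "card {x\<in>VX. E c x mod b = 0} = b ^ (card {..<m} - 1)"
          unfolding E2 VX_def using l pb b2 by (intro hyperplane) auto
        thus "card {x\<in>VX. E c x mod b = 0} = b ^ (m - 1)" by simp
      qed simp
      also have "\<dots> = (b ^ n - 1) * b ^ (m - 1)" using fVI z0V cVI by (simp add: card_Diff_singleton)
      finally show ?thesis .
    qed
    have c2: "card Q = card K * b ^ n + (b ^ m - card K) * b ^ (n - 1)"
    proof -
      have s1: "card Q' = (\<Sum>x\<in>VX. card {c\<in>VI. E c x mod b = 0})"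
        unfolding Q'_def using fVI fVX by (intro card_SigmaI) auto
      have s2: "(\<Sum>x\<in>VX. card {c\<in>VI. E c x mod b = 0}) = (\<Sum>x\<in>K. card {c\<in>VI. E c x mod b = 0}) + (\<Sum>x\<in>VX - K. card {c\<in>VI. E c x mod b = 0})"
        using sum.subset_diff[OF KVX fVX, of "\<lambda>x. card {c\<in>VI. E c x mod b = 0}"] by (simp only: add.commute)
      have s3: "(\<Sum>x\<in>K. card {c\<in>VI. E c x mod b = 0}) = (\<Sum>x\<in>K. b ^ n)"
      proof (rule sum.cong)
        fix x assume "x \<in> K"
        hence "E c x mod b = 0" for c unfolding E_def K_def by (intro sum_mod_zero) auto
        thus "card {c\<in>VI. E c x mod b = 0} = b ^ n" using cVI by simp
      qed simp
      have s4: "(\<Sum>x\<in>VX - K. card {c\<in>VI. E c x mod b = 0}) = (\<Sum>x\<in>VX - K. b ^ (n - 1))"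
      proof (rule sum.cong)
        fix x assume x: "x \<in> VX - K"
        hence "\<not> (\<forall>i\<in>I. (\<Sum>l<m. A i l * x l) mod b = 0)" unfolding K_def by simp
        then obtain i where i: "i \<in> I" "(\<Sum>l<m. A i l * x l) mod b \<noteq> 0" by blast
        have h: "card {c\<in>VI. (\<Sum>i\<in>I. (\<Sum>l<m. A i l * x l) * c i) mod b = 0} = b ^ (card I - 1)"
          unfolding VI_def using i pb b2 fI by (intro hyperplane) auto
        have "{c\<in>VI. E c x mod b = 0} = {c\<in>VI. (\<Sum>i\<in>I. (\<Sum>l<m. A i l * x l) * c i) mod b = 0}"
          unfolding E_def by (simp only: mult.commute)
        thus "card {c\<in>VI. E c x mod b = 0} = b ^ (n - 1)" using h unfolding n_def by simp
      qed simp
      have s5: "card (VX - K) = b ^ m - card K" using KVX fVX cVX by (simp add: card_Diff_subset finite_subset)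
      show ?thesis using \<open>card Q' = card Q\<close> s1 s2 s3 s4 s5 by simp
    qed
    define B where "B = b ^ (m - 1)"
    define N where "N = b ^ (n - 1)"
    have bm: "b ^ m = b * B" unfolding B_def using m1 by (cases m) auto
    have bn: "b ^ n = b * N" unfolding N_def using n1 by (cases n) auto
    have Kle: "card K \<le> b ^ m" using card_mono[OF fVX KVX] cVX by simp
    have eqn: "b * B + (b * N - 1) * B = card K * (b * N) + (b * B - card K) * N"
      using c1 c2 unfolding bm bn B_def[symmetric] N_def[symmetric] by simp
    have "int (b * B) + (int b * int N - 1) * int B = int (card K) * (int b * int N) + (int b * int B - int (card K)) * int N"
    proof -
      have "1 \<le> b * N" unfolding N_def using b2 by simp
      hence d1: "int (b * N - 1) = int b * int N - 1" by (simp add: of_nat_diff)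
      have d2: "int (b * B - card K) = int b * int B - int (card K)" using Kle bm by (simp add: of_nat_diff)
      have "int (b * B + (b * N - 1) * B) = int (card K * (b * N) + (b * B - card K) * N)"
        using eqn by (simp only:)
      thus ?thesis unfolding of_nat_add of_nat_mult d1 d2 by simp
    qed
    hence "(int b - 1) * (int B - int (card K) * int N) = 0" by (simp add: algebra_simps)
    hence "int B = int (card K) * int N" using b2 by simp
    hence BKN: "B = card K * N" by (simp flip: of_nat_mult)
    have "0 < card K"
    proof -
      define x0 where "x0 = (\<lambda>l\<in>{..<m}. (0::nat))"
      have "x0 \<in> K" unfolding K_def VX_def x0_def using b2 by auto
      thus ?thesis using finite_subset[OF KVX fVX] card_gt_0_iff by blast
    qed
    have nm: "n \<le> m"
    proof (rule ccontr)
      assume "\<not> n \<le> m"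
      hence "B < N" unfolding B_def N_def using b2 m1 by (intro power_strict_increasing) auto
      moreover have "N \<le> B" using BKN \<open>0 < card K\<close> by simp
      ultimately show False by simp
    qed
    have "b ^ (m - 1) = b ^ (m - n) * b ^ (n - 1)" using nm n1 by (simp flip: power_add)
    hence "B = b ^ (m - n) * N" unfolding B_def N_def .
    hence "card K * N = b ^ (m - n) * N" using BKN by simp
    moreover have "N > 0" unfolding N_def using b2 by simp
    ultimately have "card K = b ^ (m - n)" by simp
    thus ?thesis using nm unfolding K_def VX_def n_def by simp
  qed
qed

lemma sum_mod_inner:
  fixes b :: nat
  shows "(\<Sum>i\<in>I. f i * (g i mod b)) mod b = (\<Sum>i\<in>I. f i * g i) mod b"
proof -
  have "(\<Sum>i\<in>I. f i * (g i mod b)) mod b = (\<Sum>i\<in>I. f i * (g i mod b) mod b) mod b"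
    by (simp only: mod_sum_eq)
  also have "(\<Sum>i\<in>I. f i * (g i mod b) mod b) = (\<Sum>i\<in>I. f i * g i mod b)"
    by (simp only: mod_mult_right_eq)
  also have "(\<Sum>i\<in>I. f i * g i mod b) mod b = (\<Sum>i\<in>I. f i * g i) mod b"
    by (simp only: mod_sum_eq)
  finally show ?thesis .
qed

lemma fiber_card:
  fixes b m :: nat and I :: "'i set" and A :: "'i \<Rightarrow> nat \<Rightarrow> nat"
  assumes pb: "prime b" and fI: "finite I"
    and indep: "\<forall>c\<in>PiE I (\<lambda>_. {..<b}). (\<forall>l<m. (\<Sum>i\<in>I. c i * A i l) mod b = 0) \<longrightarrow> (\<forall>i\<in>I. c i = 0)"
    and yV: "y \<in> PiE I (\<lambda>_. {..<b})"
  shows "card {x \<in> PiE {..<m} (\<lambda>_. {..<b}). \<forall>i\<in>I. (\<Sum>l<m. A i l * x l) mod b = y i} = b ^ (m - card I)"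
proof -
  define VI where "VI = PiE I (\<lambda>_. {..<b})"
  define VX where "VX = PiE {..<m} (\<lambda>_::nat. {..<b})"
  define F where "F y = {x \<in> VX. \<forall>i\<in>I. (\<Sum>l<m. A i l * x l) mod b = y i}" for y
  define K where "K = {x \<in> VX. \<forall>i\<in>I. (\<Sum>l<m. A i l * x l) mod b = 0}"
  define kc where "kc = b ^ (m - card I)"
  have b2: "b \<ge> 2" using pb prime_ge_2_nat by blast
  have kk: "card I \<le> m" "card K = kc"
    using kernel_card[OF pb fI indep] unfolding K_def VX_def kc_def by auto
  have fVI: "finite VI" unfolding VI_def using fI by (simp add: finite_PiE)
  have fVX: "finite VX" unfolding VX_def by (simp add: finite_PiE)
  have fK: "finite K" unfolding K_def using fVX by simp
  have cVI: "card VI = b ^ card I" unfolding VI_def using fI by (simp add: card_PiE)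
  have cVX: "card VX = b ^ m" unfolding VX_def by (simp add: card_PiE)
  have le: "card (F y) \<le> kc" for y
  proof (cases "F y = {}")
    case True thus ?thesis by simp
  next
    case False
    then obtain x0 where x0: "x0 \<in> F y" by auto
    define g where "g x = (\<lambda>l\<in>{..<m}. (x l + (b - x0 l)) mod b)" for x :: "nat \<Rightarrow> nat"
    have "inj_on g (F y)"
    proof (rule inj_onI)
      fix x x' assume xx: "x \<in> F y" "x' \<in> F y" "g x = g x'"
      show "x = x'"
      proof
        fix l
        show "x l = x' l"
        proof (cases "l < m")
          case True
          have "g x l = g x' l" using xx(3) by simp
          hence "(x l + (b - x0 l)) mod b = (x' l + (b - x0 l)) mod b"
            using True unfolding g_def by simp
          hence "[x l = x' l] (mod b)" by (simp add: cong_def[symmetric] cong_add_rcancel_nat)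
          moreover have "x l < b" "x' l < b" using xx True unfolding F_def VX_def by auto
          ultimately show ?thesis by (simp add: cong_def)
        next
          case False
          thus ?thesis using xx unfolding F_def VX_def by (auto simp: PiE_def extensional_def)
        qed
      qed
    qed
    moreover have "g ` F y \<subseteq> K"
    proof
      fix z assume "z \<in> g ` F y"
      then obtain x where x: "x \<in> F y" "z = g x" by auto
      have "z \<in> VX" unfolding x(2) g_def VX_def using b2 by auto
      moreover have "(\<Sum>l<m. A i l * z l) mod b = 0" if i: "i \<in> I" for i
      proof -
        define S1 where "S1 = (\<Sum>l<m. A i l * x l)"
        define S0 where "S0 = (\<Sum>l<m. A i l * x0 l)"
        define S2 where "S2 = (\<Sum>l<m. A i l * (b - x0 l))"
        have "(\<Sum>l<m. A i l * z l) = (\<Sum>l<m. A i l * ((x l + (b - x0 l)) mod b))"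
          unfolding x(2) g_def by simp
        hence c1: "[(\<Sum>l<m. A i l * z l) = (\<Sum>l<m. A i l * (x l + (b - x0 l)))] (mod b)"
          unfolding cong_def using sum_mod_inner[of "\<lambda>l. A i l" "\<lambda>l. x l + (b - x0 l)" b "{..<m}"] by simp
        have c2: "(\<Sum>l<m. A i l * (x l + (b - x0 l))) = S1 + S2"
          unfolding S1_def S2_def by (simp add: distrib_left sum.distrib)
        have c3: "[S1 = S0] (mod b)" using x(1) x0 i unfolding F_def S1_def S0_def cong_def by auto
        have "S0 + S2 = b * (\<Sum>l<m. A i l)"
        proof -
          have "x0 l < b" if "l < m" for l using x0 that unfolding F_def VX_def by auto
          hence "S0 + S2 = (\<Sum>l<m. A i l * b)" unfolding S0_def S2_def sum.distrib[symmetric]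
          proof (intro sum.cong refl)
            fix l assume "l \<in> {..<m}"
            hence "x0 l + (b - x0 l) = b" using \<open>\<And>l. l < m \<Longrightarrow> x0 l < b\<close> by (simp add: less_imp_le)
            thus "A i l * x0 l + A i l * (b - x0 l) = A i l * b" by (simp flip: distrib_left)
          qed
          thus ?thesis by (simp add: sum_distrib_left mult.commute)
        qed
        hence c4: "[S0 + S2 = 0] (mod b)" by (simp add: cong_def)
        have c5: "[S1 + S2 = S0 + S2] (mod b)" using c3 by (rule cong_add[OF _ cong_refl])
        have "[(\<Sum>l<m. A i l * z l) = S1 + S2] (mod b)" using c1 c2 by simp
        hence "[(\<Sum>l<m. A i l * z l) = S0 + S2] (mod b)" using c5 by (rule cong_trans)
        hence "[(\<Sum>l<m. A i l * z l) = 0] (mod b)" using c4 by (rule cong_trans)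
        thus ?thesis by (simp add: cong_def)
      qed
      ultimately show "z \<in> K" unfolding K_def by simp
    qed
    ultimately have "card (F y) \<le> card K" using fK by (intro card_inj_on_le) auto
    thus ?thesis using kk by simp
  qed
  have un: "VX = (\<Union>y\<in>VI. F y)"
  proof
    show "VX \<subseteq> (\<Union>y\<in>VI. F y)"
    proof
      fix x assume x: "x \<in> VX"
      define y where "y = (\<lambda>i\<in>I. (\<Sum>l<m. A i l * x l) mod b)"
      have "y \<in> VI" unfolding y_def VI_def using b2 by auto
      moreover have "x \<in> F y" unfolding F_def y_def using x by auto
      ultimately show "x \<in> (\<Union>y\<in>VI. F y)" by blast
    qed
  qed (auto simp: F_def)
  have "card VX = (\<Sum>y\<in>VI. card (F y))"
    unfolding un
  proof (rule card_UN_disjoint)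
    show "finite VI" by (rule fVI)
    show "\<forall>y\<in>VI. finite (F y)" unfolding F_def using fVX by simp
    show "\<forall>y\<in>VI. \<forall>y'\<in>VI. y \<noteq> y' \<longrightarrow> F y \<inter> F y' = {}"
    proof (intro ballI impI)
      fix y y' assume yy: "y \<in> VI" "y' \<in> VI" "y \<noteq> y'"
      show "F y \<inter> F y' = {}"
      proof (rule ccontr)
        assume "F y \<inter> F y' \<noteq> {}"
        then obtain x where "x \<in> F y" "x \<in> F y'" by auto
        hence "\<forall>i\<in>I. y i = y' i" unfolding F_def by auto
        hence "y = y'" using yy unfolding VI_def by (auto simp: PiE_def extensional_def fun_eq_iff)
        thus False using yy by simp
      qed
    qed
  qed
  hence sumF: "(\<Sum>y\<in>VI. card (F y)) = b ^ m" using cVX by simp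
  have sumK: "(\<Sum>y\<in>VI. kc) = b ^ m" using cVI kk unfolding kc_def by (simp flip: power_add)
  have "card (F y) = kc"
  proof (rule ccontr)
    assume "card (F y) \<noteq> kc"
    hence "card (F y) < kc" using le[of y] by simp
    hence "(\<Sum>y\<in>VI. card (F y)) < (\<Sum>y\<in>VI. kc)"
      using fVI yV le unfolding VI_def by (intro sum_strict_mono_ex1) auto
    thus False using sumF sumK by simp
  qed
  thus ?thesis unfolding F_def VX_def kc_def .
qed

lemma rev_aux: "(a::nat) < m \<Longrightarrow> m - 1 - (m - 1 - a) = a" by arith

lemma rev_sum: "(\<Sum>i<(m::nat). f i) = (\<Sum>l<m. f (m - 1 - l))"
  by (rule sum.reindex_bij_witness[where i="\<lambda>l. m - 1 - l" and j="\<lambda>l. m - 1 - l"]) (auto simp: rev_aux)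

lemma div_eq_iff_bounds:
  fixes M q a :: nat
  assumes "q > 0"
  shows "M div q = a \<longleftrightarrow> a * q \<le> M \<and> M < (a + 1) * q"
proof
  assume "M div q = a"
  moreover have "M div q * q \<le> M" by (rule div_times_less_eq_dividend)
  moreover have "M < (M div q + 1) * q"
    using assms by (metis add.commute div_mult_mod_eq mod_less_divisor add_less_mono1 distrib_right mult_1 nat_add_left_cancel_less)
  ultimately show "a * q \<le> M \<and> M < (a + 1) * q" by simp
next
  assume h: "a * q \<le> M \<and> M < (a + 1) * q"
  hence "a \<le> M div q" using assms by (metis div_le_mono nonzero_mult_div_cancel_right less_not_refl2)
  moreover have "M div q < a + 1" using h assms by (simp add: div_less_iff_less_mult)
  ultimately show "M div q = a" by simp
qed

lemma box_iff:
  fixes b m d a k j :: nat and C :: "nat \<Rightarrow> nat \<Rightarrow> nat \<Rightarrow> nat"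
  assumes b2: "b \<ge> 2" and dm: "d \<le> m" and ab: "a < b ^ d"
  shows "(real a / real b ^ d \<le> dnet_point b m C k j \<and> dnet_point b m C k j < real (a + 1) / real b ^ d)
     \<longleftrightarrow> (\<forall>i<d. (\<Sum>l<m. C j i l * digit b k l) mod b = a div b ^ (d - 1 - i) mod b)"
proof -
  define Yv where "Yv i = (\<Sum>l<m. C j i l * digit b k l) mod b" for i
  define M where "M = (\<Sum>l<m. Yv (m - 1 - l) * b ^ l)"
  have b0: "b > 0" using b2 by simp
  have Yb: "\<forall>l<m. Yv (m - 1 - l) < b" unfolding Yv_def using b0 by simp
  have MLt: "M < b ^ m" unfolding M_def using Yb by (rule digits_sum_less)
  have R1: "dnet_point b m C k j * real b ^ m = real M"
  proof -
    have "dnet_point b m C k j * real b ^ m = (\<Sum>i<m. real (Yv i) / real b ^ (i + 1) * real b ^ m)"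
      unfolding dnet_point_def Yv_def by (simp add: sum_distrib_right)
    also have "\<dots> = (\<Sum>i<m. real (Yv i) * real b ^ (m - 1 - i))"
    proof (rule sum.cong)
      fix i assume "i \<in> {..<m}"
      hence "m = (i + 1) + (m - 1 - i)" by simp
      hence "real b ^ m = real b ^ (i + 1) * real b ^ (m - 1 - i)"
        by (metis power_add)
      thus "real (Yv i) / real b ^ (i + 1) * real b ^ m = real (Yv i) * real b ^ (m - 1 - i)"
        using b0 by simp
    qed simp
    also have "\<dots> = (\<Sum>l<m. real (Yv (m - 1 - l)) * real b ^ (m - 1 - (m - 1 - l)))"
      by (rule rev_sum)
    also have "\<dots> = (\<Sum>l<m. real (Yv (m - 1 - l)) * real b ^ l)"
      by (intro sum.cong) auto
    also have "\<dots> = real M" unfolding M_def by simp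
    finally show ?thesis .
  qed
  define q where "q = b ^ (m - d)"
  have q0: "q > 0" unfolding q_def using b0 by simp
  have bm: "b ^ m = b ^ d * q" unfolding q_def using dm by (simp flip: power_add)
  have R2: "(real a / real b ^ d \<le> dnet_point b m C k j \<and> dnet_point b m C k j < real (a + 1) / real b ^ d)
      \<longleftrightarrow> M div q = a"
  proof -
    define x where "x = dnet_point b m C k j"
    have "real b ^ m = real b ^ d * real q" using bm by (metis of_nat_mult of_nat_power)
    hence "x * (real b ^ d * real q) = real M" using R1 unfolding x_def by simp
    moreover have "real b ^ d * real q > 0" using b0 q0 by simp
    ultimately have xe: "x = real M / (real b ^ d * real q)" using b0 q0 by (simp add: eq_divide_eq)
    have pd: "real b ^ d > 0" using b0 by simp
    have pq: "real q > 0" using q0 by simp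
    have "real a / real b ^ d \<le> x \<longleftrightarrow> real a * real q \<le> real M"
      unfolding xe using pd pq b0 by (simp add: field_simps)
    moreover have "x < real (a + 1) / real b ^ d \<longleftrightarrow> real M < real (a + 1) * real q"
      unfolding xe using pd pq b0 by (simp add: field_simps)
    ultimately have "(real a / real b ^ d \<le> x \<and> x < real (a + 1) / real b ^ d)
        \<longleftrightarrow> a * q \<le> M \<and> M < (a + 1) * q"
      by (simp only: of_nat_mult[symmetric] of_nat_le_iff of_nat_less_iff)
    thus ?thesis using div_eq_iff_bounds[OF q0] unfolding x_def by simp
  qed
  have NL: "M div q < b ^ d" using MLt bm q0 by (simp add: div_less_iff_less_mult mult.commute)
  have dig: "M div q div b ^ p mod b = Yv (d - 1 - p)" if p: "p < d" for p
  proof -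
    have "M div q div b ^ p = M div b ^ (m - d + p)" unfolding q_def
      by (simp add: div_mult2_eq power_add)
    also have "m - d + p = m - 1 - (d - 1 - p)" using p dm by simp
    finally have "M div q div b ^ p mod b = M div b ^ (m - 1 - (d - 1 - p)) mod b" by simp
    also have "\<dots> = Yv (m - 1 - (m - 1 - (d - 1 - p)))"
      unfolding M_def using Yb p dm by (intro digits_extract) auto
    also have "m - 1 - (m - 1 - (d - 1 - p)) = d - 1 - p" using p dm by simp
    finally show ?thesis .
  qed
  have R3: "M div q = a \<longleftrightarrow> (\<forall>i<d. Yv i = a div b ^ (d - 1 - i) mod b)"
  proof
    assume "M div q = a"
    show "\<forall>i<d. Yv i = a div b ^ (d - 1 - i) mod b"
    proof (intro allI impI)
      fix i assume i: "i < d"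
      have "Yv (d - 1 - (d - 1 - i)) = M div q div b ^ (d - 1 - i) mod b" using dig[of "d - 1 - i"] i by simp
      thus "Yv i = a div b ^ (d - 1 - i) mod b" using i \<open>M div q = a\<close> by simp
    qed
  next
    assume h: "\<forall>i<d. Yv i = a div b ^ (d - 1 - i) mod b"
    show "M div q = a"
    proof (rule digits_unique[OF NL ab], intro allI impI)
      fix p assume p: "p < d"
      have "M div q div b ^ p mod b = Yv (d - 1 - p)" using dig p by simp
      also have "\<dots> = a div b ^ (d - 1 - (d - 1 - p)) mod b" using h p by simp
      also have "d - 1 - (d - 1 - p) = p" using p by simp
      finally show "M div q div b ^ p mod b = a div b ^ p mod b" .
    qed
  qed
  show ?thesis using R2 R3 unfolding Yv_def by simp
qed

lemma rows_lin_indep_mono: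
  assumes "rows_lin_indep b m C J d'" "\<forall>j\<in>J. d j \<le> d' j" "b > 0"
  shows "rows_lin_indep b m C J d"
  unfolding rows_lin_indep_def
proof (intro allI impI)
  fix c :: "nat \<Rightarrow> nat \<Rightarrow> nat"
  assume cb: "\<forall>j\<in>J. \<forall>i<d j. c j i < b"
    and rel: "\<forall>k<m. (\<Sum>j\<in>J. \<Sum>i<d j. c j i * C j i k) mod b = 0"
  define c' where "c' j i = (if i < d j then c j i else 0)" for j i
  have "\<forall>j\<in>J. \<forall>i<d' j. c' j i < b" using cb assms(3) unfolding c'_def by auto
  moreover have "\<forall>k<m. (\<Sum>j\<in>J. \<Sum>i<d' j. c' j i * C j i k) mod b = 0"
  proof (intro allI impI)
    fix k assume k: "k < m"
    have "(\<Sum>j\<in>J. \<Sum>i<d' j. c' j i * C j i k) = (\<Sum>j\<in>J. \<Sum>i<d j. c j i * C j i k)"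
    proof (rule sum.cong)
      fix j assume "j \<in> J"
      hence "{..<d j} \<subseteq> {..<d' j}" using assms(2) by auto
      thus "(\<Sum>i<d' j. c' j i * C j i k) = (\<Sum>i<d j. c j i * C j i k)"
        by (intro sum.mono_neutral_cong_right) (auto simp: c'_def)
    qed simp
    thus "(\<Sum>j\<in>J. \<Sum>i<d' j. c' j i * C j i k) mod b = 0" using rel k by simp
  qed
  ultimately have "\<forall>j\<in>J. \<forall>i<d' j. c' j i = 0" using assms(1) unfolding rows_lin_indep_def by blast
  show "\<forall>j\<in>J. \<forall>i<d j. c j i = 0"
  proof (intro ballI allI impI)
    fix j i assume ji: "j \<in> J" "i < d j"
    hence "i < d' j" using assms(2) by (meson order_less_le_trans)
    hence "c' j i = 0" using \<open>\<forall>j\<in>J. \<forall>i<d' j. c' j i = 0\<close> ji by blast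
    thus "c j i = 0" using ji unfolding c'_def by simp
  qed
qed

lemma rows_lin_indep_cong:
  assumes "\<forall>j\<in>J. \<forall>i<d j. \<forall>k<m. C j i k = C' j i k"
  shows "rows_lin_indep b m C J d = rows_lin_indep b m C' J d"
proof -
  have "(\<Sum>j\<in>J. \<Sum>i<d j. c j i * C j i k) = (\<Sum>j\<in>J. \<Sum>i<d j. c j i * C' j i k)" if "k < m" for c k
    using assms that by (intro sum.cong refl) auto
  hence "(\<forall>k<m. (\<Sum>j\<in>J. \<Sum>i<d j. c j i * C j i k) mod b = 0) = (\<forall>k<m. (\<Sum>j\<in>J. \<Sum>i<d j. c j i * C' j i k) mod b = 0)" for c
    by auto
  thus ?thesis unfolding rows_lin_indep_def by simp
qed

lemma swap_lemma:
  fixes c :: "'i \<Rightarrow> nat"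
  shows "(\<Sum>i\<in>I. c i * (\<Sum>l\<in>L. A i l * x l)) = (\<Sum>l\<in>L. (\<Sum>i\<in>I. c i * A i l) * x l)"
proof -
  have "(\<Sum>i\<in>I. c i * (\<Sum>l\<in>L. A i l * x l)) = (\<Sum>i\<in>I. \<Sum>l\<in>L. c i * A i l * x l)"
    by (simp add: sum_distrib_left mult.assoc)
  also have "\<dots> = (\<Sum>l\<in>L. \<Sum>i\<in>I. c i * A i l * x l)" by (rule sum.swap)
  also have "\<dots> = (\<Sum>l\<in>L. (\<Sum>i\<in>I. c i * A i l) * x l)" by (simp add: sum_distrib_right)
  finally show ?thesis .
qed

lemma sum2_mod_inner:
  fixes b :: nat
  shows "(\<Sum>j\<in>J. \<Sum>i\<in>I j. f j i * (g j i mod b)) mod b = (\<Sum>j\<in>J. \<Sum>i\<in>I j. f j i * g j i) mod b"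
proof -
  have "(\<Sum>j\<in>J. \<Sum>i\<in>I j. f j i * (g j i mod b)) mod b = (\<Sum>j\<in>J. (\<Sum>i\<in>I j. f j i * (g j i mod b)) mod b) mod b"
    by (simp only: mod_sum_eq)
  also have "(\<Sum>j\<in>J. (\<Sum>i\<in>I j. f j i * (g j i mod b)) mod b) = (\<Sum>j\<in>J. (\<Sum>i\<in>I j. f j i * g j i) mod b)"
    by (simp only: sum_mod_inner)
  also have "(\<Sum>j\<in>J. (\<Sum>i\<in>I j. f j i * g j i) mod b) mod b = (\<Sum>j\<in>J. \<Sum>i\<in>I j. f j i * g j i) mod b"
    by (simp only: mod_sum_eq)
  finally show ?thesis .
qed

lemma exists_a:
  fixes b d :: nat
  assumes "\<forall>i<d. z i < b"
  shows "\<exists>a. a < b ^ d \<and> (\<forall>i<d. a div b ^ (d - 1 - i) mod b = z i)"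
proof -
  define a where "a = (\<Sum>p<d. z (d - 1 - p) * b ^ p)"
  have zb: "\<forall>p<d. z (d - 1 - p) < b" using assms by simp
  have "a < b ^ d" unfolding a_def using zb by (rule digits_sum_less)
  moreover have "a div b ^ (d - 1 - i) mod b = z i" if "i < d" for i
  proof -
    have "a div b ^ (d - 1 - i) mod b = z (d - 1 - (d - 1 - i))"
      unfolding a_def using zb that by (intro digits_extract) auto
    thus ?thesis using that by simp
  qed
  ultimately show ?thesis by blast
qed

lemma digit_bij:
  fixes b m :: nat
  assumes b2: "b \<ge> 2"
  shows "card {k. k < b ^ m \<and> P (\<lambda>l\<in>{..<m}. digit b k l)} = card {x \<in> PiE {..<m} (\<lambda>_. {..<b}). P x}"
proof -
  define dg where "dg k = (\<lambda>l\<in>{..<m}. digit b k l)" for k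
  have b0: "b > 0" using b2 by simp
  have inj: "inj_on dg {..<b ^ m}"
  proof (rule inj_onI)
    fix k k' assume kk: "k \<in> {..<b ^ m}" "k' \<in> {..<b ^ m}" "dg k = dg k'"
    show "k = k'"
    proof (rule digits_unique[of k b m k'])
      show "k < b ^ m" "k' < b ^ m" using kk by auto
      show "\<forall>p<m. k div b ^ p mod b = k' div b ^ p mod b"
      proof (intro allI impI)
        fix p assume "p < m"
        hence "dg k p = dg k' p" using kk by simp
        thus "k div b ^ p mod b = k' div b ^ p mod b" using \<open>p < m\<close> unfolding dg_def digit_def by simp
      qed
    qed
  qed
  have sub: "dg ` {..<b ^ m} \<subseteq> PiE {..<m} (\<lambda>_. {..<b})"
  proof
    fix x assume "x \<in> dg ` {..<b ^ m}"
    then obtain k where "x = dg k" by auto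
    thus "x \<in> PiE {..<m} (\<lambda>_. {..<b})" unfolding dg_def digit_def using b0 by (simp add: restrict_PiE_iff)
  qed
  have "card (dg ` {..<b ^ m}) = card (PiE {..<m} (\<lambda>_::nat. {..<b}))"
    using inj by (simp add: card_image card_PiE)
  hence img: "dg ` {..<b ^ m} = PiE {..<m} (\<lambda>_. {..<b})"
    using sub by (intro card_subset_eq) (auto simp: finite_PiE)
  have "{x \<in> PiE {..<m} (\<lambda>_. {..<b}). P x} = dg ` {k. k < b ^ m \<and> P (dg k)}"
    unfolding img[symmetric] by auto
  moreover have "inj_on dg {k. k < b ^ m \<and> P (dg k)}" using inj by (rule inj_on_subset) auto
  ultimately show ?thesis unfolding dg_def[symmetric] by (simp add: card_image)
qed

lemma net_indep:
  fixes b m t :: nat and C :: "nat \<Rightarrow> nat \<Rightarrow> nat \<Rightarrow> nat"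
  assumes pb: "prime b" and fu: "finite u" and net: "is_proj_tms_net b m C u t"
    and sd: "sum d u = m - t"
  shows "rows_lin_indep b m C u d"
  unfolding rows_lin_indep_def
proof (intro allI impI)
  fix c :: "nat \<Rightarrow> nat \<Rightarrow> nat"
  assume cb: "\<forall>j\<in>u. \<forall>i<d j. c j i < b"
    and rel: "\<forall>k<m. (\<Sum>j\<in>u. \<Sum>i<d j. c j i * C j i k) mod b = 0"
  have b2: "b \<ge> 2" using pb prime_ge_2_nat by blast
  show "\<forall>j\<in>u. \<forall>i<d j. c j i = 0"
  proof (rule ccontr)
    assume "\<not> (\<forall>j\<in>u. \<forall>i<d j. c j i = 0)"
    then obtain j0 i0 where j0: "j0 \<in> u" "i0 < d j0" "c j0 i0 \<noteq> 0" by blast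
    have dm: "d j \<le> m" if "j \<in> u" for j
      using member_le_sum[of j u d] that fu sd by simp
    define z where "z j p = (if j = j0 \<and> p = d j0 - 1 - i0 then 1 else (0::nat))" for j p
    have "\<exists>a. a < b ^ d j \<and> (\<forall>i<d j. a div b ^ (d j - 1 - i) mod b = z j (d j - 1 - i))" for j
      using b2 by (intro exists_a) (auto simp: z_def)
    then obtain a where a: "\<And>j. a j < b ^ d j" "\<And>j i. i < d j \<Longrightarrow> a j div b ^ (d j - 1 - i) mod b = z j (d j - 1 - i)"
      by metis
    have "card {k. k < b ^ m \<and> (\<forall>j\<in>u. real (a j) / real b ^ d j \<le> dnet_point b m C k j \<and>
             dnet_point b m C k j < real (a j + 1) / real b ^ d j)} = b ^ t"
      using net sd a(1) unfolding is_proj_tms_net_def by blast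
    moreover have "{k. k < b ^ m \<and> (\<forall>j\<in>u. real (a j) / real b ^ d j \<le> dnet_point b m C k j \<and>
             dnet_point b m C k j < real (a j + 1) / real b ^ d j)} = {}"
    proof (rule ccontr)
      assume "{k. k < b ^ m \<and> (\<forall>j\<in>u. real (a j) / real b ^ d j \<le> dnet_point b m C k j \<and>
             dnet_point b m C k j < real (a j + 1) / real b ^ d j)} \<noteq> {}"
      then obtain k where k: "k < b ^ m" "\<forall>j\<in>u. real (a j) / real b ^ d j \<le> dnet_point b m C k j \<and>
             dnet_point b m C k j < real (a j + 1) / real b ^ d j" by blast
      define Y where "Y j i = (\<Sum>l<m. C j i l * digit b k l)" for j i
      have Yv: "Y j i mod b = (if j = j0 \<and> i = i0 then 1 else 0)" if ji: "j \<in> u" "i < d j" for j i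
      proof -
        have "\<forall>i<d j. Y j i mod b = a j div b ^ (d j - 1 - i) mod b"
          using k(2) ji box_iff[OF b2 dm[OF ji(1)] a(1)[of j], of C k] unfolding Y_def by blast
        hence "Y j i mod b = z j (d j - 1 - i)" using a(2) ji by simp
        moreover have "(j = j0 \<and> d j - 1 - i = d j0 - 1 - i0) \<longleftrightarrow> (j = j0 \<and> i = i0)"
          using ji j0 by auto
        ultimately show ?thesis unfolding z_def by simp
      qed
      have "(\<Sum>j\<in>u. \<Sum>i<d j. c j i * (Y j i mod b)) = (\<Sum>j\<in>u. \<Sum>i<d j. (if j = j0 \<and> i = i0 then c j i else 0))"
        using Yv by (intro sum.cong refl) auto
      also have "\<dots> = (\<Sum>j\<in>u. if j = j0 then c j0 i0 else 0)"
      proof (rule sum.cong)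
        fix j assume "j \<in> u"
        show "(\<Sum>i<d j. (if j = j0 \<and> i = i0 then c j i else 0)) = (if j = j0 then c j0 i0 else 0)"
          using j0 by (cases "j = j0") (auto simp: sum.delta)
      qed simp
      also have "\<dots> = c j0 i0" using fu j0 by (simp add: sum.delta)
      finally have e1: "(\<Sum>j\<in>u. \<Sum>i<d j. c j i * (Y j i mod b)) mod b = c j0 i0"
        using cb j0 by simp
      have "(\<Sum>j\<in>u. \<Sum>i<d j. c j i * (Y j i mod b)) mod b = (\<Sum>j\<in>u. \<Sum>i<d j. c j i * Y j i) mod b"
        by (rule sum2_mod_inner)
      also have "(\<Sum>j\<in>u. \<Sum>i<d j. c j i * Y j i) = (\<Sum>j\<in>u. \<Sum>l<m. (\<Sum>i<d j. c j i * C j i l) * digit b k l)"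
        unfolding Y_def by (simp only: swap_lemma)
      also have "\<dots> = (\<Sum>l<m. \<Sum>j\<in>u. (\<Sum>i<d j. c j i * C j i l) * digit b k l)" by (rule sum.swap)
      also have "\<dots> = (\<Sum>l<m. digit b k l * (\<Sum>j\<in>u. \<Sum>i<d j. c j i * C j i l))"
        by (simp add: sum_distrib_left mult.commute)
      finally have "(\<Sum>j\<in>u. \<Sum>i<d j. c j i * (Y j i mod b)) mod b = 0"
        using sum_mod_zero[of "{..<m}" "\<lambda>l. \<Sum>j\<in>u. \<Sum>i<d j. c j i * C j i l" b "\<lambda>l. digit b k l"] rel
        by (simp add: mult.commute)
      thus False using e1 j0 by simp
    qed
    ultimately have "b ^ t = 0" by (simp only: card.empty)
    thus False using b2 by simp
  qed
qed

lemma indep_net: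
  fixes b m T :: nat and C :: "nat \<Rightarrow> nat \<Rightarrow> nat \<Rightarrow> nat"
  assumes pb: "prime b" and fu: "finite u" and Tm: "T \<le> m"
    and ind: "\<forall>d. sum d u = m - T \<longrightarrow> rows_lin_indep b m C u d"
  shows "is_proj_tms_net b m C u T"
  unfolding is_proj_tms_net_def
proof (intro conjI allI impI)
  show "T \<le> m" by (rule Tm)
  fix d a :: "nat \<Rightarrow> nat"
  assume sd: "sum d u = m - T" and ab: "\<forall>j\<in>u. a j < b ^ d j"
  have b2: "b \<ge> 2" using pb prime_ge_2_nat by blast
  define I where "I = Sigma u (\<lambda>j. {..<d j})"
  define A where "A q l = C (fst q) (snd q) l" for q :: "nat \<times> nat" and l
  define tg where "tg = (\<lambda>q\<in>I. a (fst q) div b ^ (d (fst q) - 1 - snd q) mod b)"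
  have fI: "finite I" unfolding I_def using fu by simp
  have cI: "card I = m - T" unfolding I_def using fu sd by simp
  have dm: "d j \<le> m" if "j \<in> u" for j
    using member_le_sum[of j u d] that fu sd by simp
  have sumI: "(\<Sum>j\<in>u. \<Sum>i<d j. g j i) = (\<Sum>q\<in>I. g (fst q) (snd q))" for g :: "nat \<Rightarrow> nat \<Rightarrow> nat"
    unfolding I_def using fu by (simp add: sum.Sigma split_beta)
  have indepI: "\<forall>c\<in>PiE I (\<lambda>_. {..<b}). (\<forall>l<m. (\<Sum>q\<in>I. c q * A q l) mod b = 0) \<longrightarrow> (\<forall>q\<in>I. c q = 0)"
  proof (intro ballI impI)
    fix c q assume cm: "c \<in> PiE I (\<lambda>_. {..<b})"
      and rel: "\<forall>l<m. (\<Sum>q\<in>I. c q * A q l) mod b = 0" and q: "q \<in> I"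
    define c' where "c' j i = c (j, i)" for j i
    have ri: "rows_lin_indep b m C u d" using ind sd by blast
    have "\<forall>j\<in>u. \<forall>i<d j. c' j i < b" using cm unfolding c'_def I_def by auto
    moreover have "\<forall>k<m. (\<Sum>j\<in>u. \<Sum>i<d j. c' j i * C j i k) mod b = 0"
      using rel unfolding sumI c'_def A_def by simp
    ultimately have "\<forall>j\<in>u. \<forall>i<d j. c' j i = 0" using ri unfolding rows_lin_indep_def by blast
    thus "c q = 0" using q unfolding c'_def I_def by auto
  qed
  have tgV: "tg \<in> PiE I (\<lambda>_. {..<b})" unfolding tg_def using b2 by (simp add: restrict_PiE_iff)
  have seteq: "{k. k < b ^ m \<and> (\<forall>j\<in>u. real (a j) / real b ^ d j \<le> dnet_point b m C k j \<and>
             dnet_point b m C k j < real (a j + 1) / real b ^ d j)}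
      = {k. k < b ^ m \<and> (\<lambda>x. \<forall>q\<in>I. (\<Sum>l<m. A q l * x l) mod b = tg q) (\<lambda>l\<in>{..<m}. digit b k l)}"
  proof -
    have "(\<forall>j\<in>u. real (a j) / real b ^ d j \<le> dnet_point b m C k j \<and>
             dnet_point b m C k j < real (a j + 1) / real b ^ d j)
        \<longleftrightarrow> (\<forall>j\<in>u. \<forall>i<d j. (\<Sum>l<m. C j i l * digit b k l) mod b = a j div b ^ (d j - 1 - i) mod b)" for k
      using box_iff[OF b2 dm ab[rule_format]] by blast
    moreover have "(\<forall>j\<in>u. \<forall>i<d j. (\<Sum>l<m. C j i l * digit b k l) mod b = a j div b ^ (d j - 1 - i) mod b)
        \<longleftrightarrow> (\<forall>q\<in>I. (\<Sum>l<m. A q l * (\<lambda>l\<in>{..<m}. digit b k l) l) mod b = tg q)" for k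
    proof -
      have "(\<Sum>l<m. A q l * (\<lambda>l\<in>{..<m}. digit b k l) l) = (\<Sum>l<m. A q l * digit b k l)" for q
        by (intro sum.cong) auto
      thus ?thesis unfolding I_def tg_def A_def by auto
    qed
    ultimately show ?thesis by simp
  qed
  show "card {k. k < b ^ m \<and> (\<forall>j\<in>u. real (a j) / real b ^ d j \<le> dnet_point b m C k j \<and>
             dnet_point b m C k j < real (a j + 1) / real b ^ d j)} = b ^ T"
    unfolding seteq
    using digit_bij[OF b2, of m "\<lambda>x. \<forall>q\<in>I. (\<Sum>l<m. A q l * x l) mod b = tg q"]
      fiber_card[OF pb fI indepI tgV] cI Tm by simp
qed

theorem corollary1:
  fixes b s m :: nat and C :: "nat \<Rightarrow> nat \<Rightarrow> nat \<Rightarrow> nat"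
    and t :: "nat set \<Rightarrow> nat" and w :: "nat \<Rightarrow> nat" and u :: "nat set"
  assumes "prime b"
    and "\<forall>j\<in>{1..s}. \<forall>i<m. \<forall>k<m. C j i k < b"
    and "\<forall>v. v \<subseteq> {1..s} \<and> v \<noteq> {} \<longrightarrow> is_proj_tms_net b m C v (t v)"
    and "w 1 = 0"
    and "\<forall>i j. 1 \<le> i \<and> i \<le> j \<and> j \<le> s \<longrightarrow> w i \<le> w j"
    and "u \<subseteq> {1..s}" and "u \<noteq> {}"
  shows "max 0 (int m - int (max (w (Max u)) (t u)))
           \<le> int (lin_indep_param b m (row_reduce m w C) u)
       \<and> int (lin_indep_param b m (row_reduce m w C) u) \<le> max 0 (int m - int (w (Max u)))
       \<and> min_quality b m (row_reduce m w C) u \<le> min m (max (w (Max u)) (t u))"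
proof -
  note pb = assms(1)
  have b2: "b \<ge> 2" using pb prime_ge_2_nat by blast
  have fu: "finite u" using assms(6) finite_subset by blast
  define jm where "jm = Max u"
  have jmu: "jm \<in> u" unfolding jm_def using fu assms(7) by simp
  have jms: "jm \<le> s" using jmu assms(6) by auto
  define Cr where "Cr = row_reduce m w C"
  define e where "e = m - max (w jm) (t u)"
  define P where "P e' = (\<forall>d. sum d u = e' \<longrightarrow> rows_lin_indep b m Cr u d)" for e'
  have P0: "P 0" unfolding P_def rows_lin_indep_def using fu by auto
  have bound: "e' \<le> m - min m (w jm)" if Pe: "P e'" for e'
  proof (rule ccontr)
    define r where "r = m - min m (w jm)"
    assume "\<not> e' \<le> m - min m (w jm)"
    hence re: "r < e'" unfolding r_def by simp
    define d where "d j = (if j = jm then e' else 0)" for j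
    have "sum d u = e'" unfolding d_def using fu jmu by (simp add: sum.delta)
    hence ri: "rows_lin_indep b m Cr u d" using Pe unfolding P_def by blast
    define c where "c j i = (if j = jm \<and> i = r then 1 else (0::nat))" for j i
    have z: "c j i * Cr j i k = 0" for j i k
      unfolding c_def Cr_def row_reduce_def r_def by simp
    have "\<forall>j\<in>u. \<forall>i<d j. c j i < b" unfolding c_def using b2 by auto
    moreover have "\<forall>k<m. (\<Sum>j\<in>u. \<Sum>i<d j. c j i * Cr j i k) mod b = 0" by (simp add: z)
    ultimately have "\<forall>j\<in>u. \<forall>i<d j. c j i = 0" using ri unfolding rows_lin_indep_def by blast
    hence "c jm r = 0" using jmu re unfolding d_def by simp
    thus False unfolding c_def by simp
  qed
  have wj: "w j \<le> w jm" if "j \<in> u" for j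
  proof -
    have "1 \<le> j" "j \<le> jm" using that assms(6) fu unfolding jm_def by auto
    thus ?thesis using assms(5)[rule_format, of j jm] jms by simp
  qed
  have Pe: "P e" unfolding P_def
  proof (intro allI impI)
    fix d assume sd: "sum d u = e"
    have net: "is_proj_tms_net b m C u (t u)" using assms(3)[rule_format, of u] assms(6,7) by simp
    have et: "e \<le> m - t u" unfolding e_def by simp
    define d' where "d' = d(jm := d jm + (m - t u - e))"
    have "sum d' u = d' jm + sum d' (u - {jm})" using fu jmu by (simp add: sum.remove)
    also have "sum d' (u - {jm}) = sum d (u - {jm})" unfolding d'_def by (intro sum.cong) auto
    also have "d' jm = d jm + (m - t u - e)" unfolding d'_def by simp
    finally have "sum d' u = d jm + sum d (u - {jm}) + (m - t u - e)" by simp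
    moreover have "sum d u = d jm + sum d (u - {jm})" using fu jmu by (rule sum.remove)
    ultimately have "sum d' u = m - t u" using sd et by simp
    hence "rows_lin_indep b m C u d'" using net_indep[OF pb fu net] by blast
    moreover have "\<forall>j\<in>u. d j \<le> d' j" unfolding d'_def by simp
    ultimately have riC: "rows_lin_indep b m C u d" using b2 rows_lin_indep_mono[of b m C u d' d] by simp
    have "\<forall>j\<in>u. \<forall>i<d j. \<forall>k<m. Cr j i k = C j i k"
    proof (intro ballI allI impI)
      fix j i k assume j: "j \<in> u" and i: "i < d j" and k: "k < m"
      have "d j \<le> e" using member_le_sum[of j u d] j fu sd by simp
      hence "i < m - w j" using i wj[OF j] unfolding e_def by simp
      thus "Cr j i k = C j i k" unfolding Cr_def row_reduce_def by simp
    qed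
    hence "rows_lin_indep b m Cr u d = rows_lin_indep b m C u d" by (rule rows_lin_indep_cong)
    thus "rows_lin_indep b m Cr u d" using riC by simp
  qed
  have rho: "lin_indep_param b m Cr u = Greatest P"
    unfolding lin_indep_param_def P_def by simp
  have r1: "e \<le> Greatest P" using Pe bound by (rule Greatest_le_nat)
  have r2: "Greatest P \<le> m - min m (w jm)" using GreatestI_nat[of P 0, OF P0 bound] bound by blast
  define T where "T = min m (max (w jm) (t u))"
  have mT: "m - T = e" unfolding T_def e_def by simp
  have "is_proj_tms_net b m Cr u T"
    using indep_net[OF pb fu, of T m Cr] Pe mT unfolding P_def T_def by simp
  hence r3: "min_quality b m Cr u \<le> T" unfolding min_quality_def by (rule Least_le)
  have "max 0 (int m - int (max (w jm) (t u))) = int e" unfolding e_def by simp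
  moreover have "max 0 (int m - int (w jm)) = int (m - min m (w jm))" by simp
  ultimately show ?thesis using r1 r2 r3 rho unfolding Cr_def[symmetric] jm_def[symmetric] T_def by simp
qed

end
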